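(* Each of the following three rules produces integers $\mathsf t_i,\mathsf p_i\in\{0,\dots,255\}$ such that the case of $(\mathsf t_i,\mathsf p_i)$ with respect to base $256$ equals the case of $(A_i,B_i)$ with respect to the limb base $b$. (1) Native radix: $b=2^{64}$, $0\le A_i,B_i<2^{64}$, $D_i=(A_i+B_i)\bmod 2^{64}$, $G_i=\mathrm{popcnt}(D_i)$, $m_i=1$ if $D_i<A_i$ and $m_i=0$ otherwise, $\mathsf t_i=G_i+65m_i$, $\mathsf p_i=191$. (2) Reduced radix $2^k$ (first rule): $1\le k\le 63$, $b=2^k$, $0\le A_i,B_i<2^k$, $D_i=A_i+B_i$, $G_i=\mathrm{popcnt}(D_i)$, $m_i=1$ if $D_i\ge 2^k$ and $m_i=0$ otherwise, $\mathsf t_i=G_i+65m_i$, $\mathsf p_i=255-k$. (3) Reduced radix $2^k$ (second rule): $1\le k\le 63$, $b=2^k$, $0\le A_i,B_i<2^k$, $D_i=A_i+B_i$, $G_i=\min(D_i+2^{64}-2^k-1,\,2^{64}-1)$, $\mathsf t_i=\max(G_i-(2^{64}-3),\,0)$, $\mathsf p_i=254$.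
   Context: $\mathrm{popcnt}(x)$ is the number of ones in the binary representation of the nonnegative integer $x$. For a base $b\ge2$ and integers $0\le x,y<b$, the case of $(x,y)$ with respect to base $b$ is $\mathbf N$ if $x+y\le b-2$, $\mathbf P$ if $x+y=b-1$, and $\mathbf G$ if $x+y\ge b$. *)

theory Defs
  imports Main
begin

fun popcnt :: "nat \<Rightarrow> nat" where
  "popcnt n = (if n = 0 then 0 else n mod 2 + popcnt (n div 2))"

datatype addcase = CaseN | CaseP | CaseG

text \<open>Case of (x,y) with respect to base b (intended for b >= 2, 0 <= x,y < b).\<close>
definition case_of :: "int \<Rightarrow> int \<Rightarrow> int \<Rightarrow> addcase" where
  "case_of b x y = (if x + y \<le> b - 2 then CaseN
                    else if x + y = b - 1 then CaseP else CaseG)"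

end

theory Submission
  imports Defs
begin

lemma popcnt_0: "popcnt 0 = 0"
  by (subst popcnt.simps) simp

lemma popcnt_eq: "popcnt n = n mod 2 + popcnt (n div 2)"
proof (cases "n = 0")
  case True then show ?thesis by (simp add: popcnt_0)
next
  case False then show ?thesis by (subst popcnt.simps) simp
qed

declare popcnt.simps[simp del]
declare popcnt_0[simp]

lemma popcnt_le: "n < 2^k \<Longrightarrow> popcnt n \<le> k"
proof (induction k arbitrary: n)
  case 0 then show ?case by simp
next
  case (Suc k)
  have "n div 2 < 2^k" using Suc.prems by simp
  then have "popcnt (n div 2) \<le> k" by (rule Suc.IH)
  then have "n mod 2 + popcnt (n div 2) \<le> Suc k" by simp
  then show ?case by (metis popcnt_eq)
qed

lemma popcnt_full: "n < 2^k \<Longrightarrow> popcnt n = k \<Longrightarrow> n = 2^k - 1"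
proof (induction k arbitrary: n)
  case 0 then show ?case by simp
next
  case (Suc k)
  have h: "n div 2 < 2^k" using Suc.prems by simp
  then have le: "popcnt (n div 2) \<le> k" by (rule popcnt_le)
  have "n mod 2 + popcnt (n div 2) = Suc k" using Suc.prems popcnt_eq by metis
  moreover have "n mod 2 \<le> 1" by simp
  ultimately have m: "n mod 2 = 1" and p: "popcnt (n div 2) = k" using le by linarith+
  have "n div 2 = 2^k - 1" using Suc.IH[OF h p] .
  then have "n = 2 * (2^k - 1) + 1" using m by (metis div_mult_mod_eq mult.commute)
  moreover have "(1::nat) \<le> 2^k" by simp
  moreover have "\<And>q::nat. 1 \<le> q \<Longrightarrow> 2*(q-1)+1 = 2*q-1" by arith
  ultimately show ?case by simp
qed

lemma popcnt_full2: "popcnt (2^k - 1) = k"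
proof (induction k)
  case 0 then show ?case by simp
next
  case (Suc k)
  have "(2::nat)^Suc k - 1 = 2 * (2^k - 1) + 1"
  proof -
    have "\<And>q::nat. 1 \<le> q \<Longrightarrow> 2*q-1 = 2*(q-1)+1" by arith
    then show ?thesis using one_le_power[of "2::nat" k] by simp
  qed
  then have a: "((2::nat)^Suc k - 1) mod 2 = 1" "((2::nat)^Suc k - 1) div 2 = 2^k - 1" by simp_all
  show ?case by (subst popcnt_eq) (simp only: a Suc.IH)
qed

theorem lemma1:
  shows
  "(\<forall>A B :: nat. A < 2^64 \<and> B < 2^64 \<longrightarrow>
      (let D = (A + B) mod 2^64; G = popcnt D; m = (if D < A then 1 else 0 :: nat);
           t = int (G + 65 * m); p = (191 :: int)
       in 0 \<le> t \<and> t \<le> 255 \<and> 0 \<le> p \<and> p \<le> 255 \<and>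
          case_of 256 t p = case_of (2^64) (int A) (int B)))
   \<and> (\<forall>k A B :: nat. 1 \<le> k \<and> k \<le> 63 \<and> A < 2^k \<and> B < 2^k \<longrightarrow>
      (let D = A + B; G = popcnt D; m = (if D \<ge> 2^k then 1 else 0 :: nat);
           t = int (G + 65 * m); p = 255 - int k
       in 0 \<le> t \<and> t \<le> 255 \<and> 0 \<le> p \<and> p \<le> 255 \<and>
          case_of 256 t p = case_of (2^k) (int A) (int B)))
   \<and> (\<forall>k A B :: nat. 1 \<le> k \<and> k \<le> 63 \<and> A < 2^k \<and> B < 2^k \<longrightarrow>
      (let D = int A + int B; G = min (D + 2^64 - 2^k - 1) (2^64 - 1);
           t = max (G - (2^64 - 3)) 0; p = (254 :: int)
       in 0 \<le> t \<and> t \<le> 255 \<and> 0 \<le> p \<and> p \<le> 255 \<and>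
          case_of 256 t p = case_of (2^k) (int A) (int B)))"
proof (intro conjI allI impI)
  fix A B :: nat
  assume ab: "A < 2^64 \<and> B < 2^64"
  show "let D = (A + B) mod 2^64; G = popcnt D; m = (if D < A then 1 else 0 :: nat);
           t = int (G + 65 * m); p = (191 :: int)
       in 0 \<le> t \<and> t \<le> 255 \<and> 0 \<le> p \<and> p \<le> 255 \<and>
          case_of 256 t p = case_of (2^64) (int A) (int B)"
  proof (cases "A + B < 2^64")
    case True
    then have D: "(A + B) mod 2^64 = A + B" by simp
    have m: "(if A + B < A then 1 else 0 :: nat) = 0" by simp
    have le: "popcnt (A + B) \<le> 64" using popcnt_le True by blast
    have f: "popcnt (A + B) = 64 \<longleftrightarrow> A + B = 2^64 - 1" using popcnt_full True popcnt_full2 by metis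
    define g where "g = popcnt (A + B)"
    have iT: "int A + int B < 2^64" using True by (metis of_nat_add of_nat_less_numeral_power_cancel_iff)
    have f': "g = 64 \<longleftrightarrow> int A + int B = 2^64 - 1" unfolding g_def f
      using True by (metis (mono_tags, lifting) of_nat_1 of_nat_add of_nat_diff of_nat_eq_iff
          of_nat_numeral of_nat_power one_le_numeral one_le_power)
    have le': "g \<le> 64" using le g_def by simp
    show ?thesis unfolding Let_def D m g_def[symmetric] case_of_def
      using le' f' iT by (cases "g = 64") simp_all
  next
    case False
    have lt: "A + B - 2^64 < A" using ab False by linarith
    have lt2: "A + B - 2^64 < 2^64" using ab False by linarith
    have "(A + B) mod 2^64 = (A + B - 2^64) mod 2^64" using False le_mod_geq not_less by blast
    then have D: "(A + B) mod 2^64 = A + B - 2^64" using lt2 by simp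
    have m: "(if A + B - 2^64 < A then 1 else 0 :: nat) = 1" using lt by simp
    define g where "g = popcnt (A + B - 2^64)"
    have le: "g \<le> 64" using popcnt_le lt2 g_def by blast
    have iF: "int A + int B \<ge> 2^64" using False by (metis not_less of_nat_add of_nat_le_iff of_nat_numeral of_nat_power)
    show ?thesis unfolding Let_def D m g_def[symmetric] case_of_def
      using le iF by simp
  qed
next
  fix k A B :: nat
  assume ab: "1 \<le> k \<and> k \<le> 63 \<and> A < 2^k \<and> B < 2^k"
  have iA: "int A < 2^k" "int B < 2^k" using ab by (metis of_nat_less_iff of_nat_numeral of_nat_power)+
  show "let D = A + B; G = popcnt D; m = (if D \<ge> 2^k then 1 else 0 :: nat);
           t = int (G + 65 * m); p = 255 - int k
       in 0 \<le> t \<and> t \<le> 255 \<and> 0 \<le> p \<and> p \<le> 255 \<and>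
          case_of 256 t p = case_of (2^k) (int A) (int B)"
  proof (cases "A + B < 2^k")
    case True
    have m: "(if A + B \<ge> 2^k then 1 else 0 :: nat) = 0" using True by simp
    define g where "g = popcnt (A + B)"
    have le: "g \<le> k" using popcnt_le True g_def by blast
    have f: "g = k \<longleftrightarrow> A + B = 2^k - 1" using popcnt_full True popcnt_full2 g_def by metis
    have iT: "int A + int B < 2^k" using True by (metis of_nat_add of_nat_less_iff of_nat_numeral of_nat_power)
    have f': "g = k \<longleftrightarrow> int A + int B = 2^k - 1" unfolding f
      using True by (metis (mono_tags, lifting) of_nat_1 of_nat_add of_nat_diff of_nat_eq_iff
          of_nat_numeral of_nat_power one_le_numeral one_le_power)
    show ?thesis unfolding Let_def m g_def[symmetric] case_of_def
      using le f' iT ab by (cases "g = k") simp_all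
  next
    case False
    have m: "(if A + B \<ge> 2^k then 1 else 0 :: nat) = 1" using False by simp
    have lt2: "A + B < 2^(Suc k)" using ab by simp
    define g where "g = popcnt (A + B)"
    have le: "g \<le> Suc k" using popcnt_le lt2 g_def by blast
    have iF: "int A + int B \<ge> 2^k" using False by (metis not_less of_nat_add of_nat_le_iff of_nat_numeral of_nat_power)
    show ?thesis unfolding Let_def m g_def[symmetric] case_of_def
      using le iF ab by simp
  qed
next
  fix k A B :: nat
  assume ab: "1 \<le> k \<and> k \<le> 63 \<and> A < 2^k \<and> B < 2^k"
  have iA: "int A < 2^k" "int B < 2^k" using ab by (metis of_nat_less_iff of_nat_numeral of_nat_power)+
  define q :: int where "q = 2^k"
  show "let D = int A + int B; G = min (D + 2^64 - 2^k - 1) (2^64 - 1);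
           t = max (G - (2^64 - 3)) 0; p = (254 :: int)
       in 0 \<le> t \<and> t \<le> 255 \<and> 0 \<le> p \<and> p \<le> 255 \<and>
          case_of 256 t p = case_of (2^k) (int A) (int B)"
    unfolding Let_def case_of_def q_def[symmetric] using iA[folded q_def]
    by (simp add: min_def max_def)
qed

end
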